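(* Let $m\geq 1$ be an integer. For all integers $n\geq 1$ and all real $x\in(0,\pi)$, $$\sum_{k=0}^n \binom{n-k+m}{m}\cos\bigl((k+1/2)x\bigr)>\begin{cases}-1/4, & m=1,\\ 0, & m\geq 2,\end{cases}$$ and $$\sum_{k=0}^n \binom{n-k+m}{m}\sin\bigl((k+1/2)x\bigr)>0.$$ All these lower bounds are sharp (the best possible constants valid for all $n\ge 1$, $x\in(0,\pi)$, for each fixed $m$ in the respective case). *)

theory Defs
  imports Complex_Main
begin

end

theory Submission
  imports Defs
begin

definition T :: "nat \<Rightarrow> nat \<Rightarrow> (nat \<Rightarrow> real) \<Rightarrow> real" where
  "T m n f = (\<Sum>k=0..n. real ((n - k + m) choose m) * f k)"

lemma T_0: "T m 0 f = f 0"
  by (simp add: T_def)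

lemma T_Suc: "T (Suc m) (Suc n) f = T (Suc m) n f + T m (Suc n) f"
proof -
  have "T (Suc m) (Suc n) f = (\<Sum>k=0..n. real ((Suc n - k + Suc m) choose (Suc m)) * f k) + f (Suc n)"
    by (simp add: T_def)
  also have "(\<Sum>k=0..n. real ((Suc n - k + Suc m) choose (Suc m)) * f k)
     = (\<Sum>k=0..n. real ((n - k + Suc m) choose (Suc m)) * f k) + (\<Sum>k=0..n. real ((Suc n - k + m) choose m) * f k)"
  proof -
    have "\<And>k. k \<in> {0..n} \<Longrightarrow> real ((Suc n - k + Suc m) choose (Suc m)) * f k
        = real ((n - k + Suc m) choose (Suc m)) * f k + real ((Suc n - k + m) choose m) * f k"
    proof -
      fix k assume "k \<in> {0..n}"
      then have k: "k \<le> n" by simp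
      have e1: "Suc n - k + Suc m = Suc (Suc n - k + m)" by simp
      have e2: "Suc n - k + m = n - k + Suc m" using k by simp
      have "(Suc n - k + Suc m) choose (Suc m) = ((Suc n - k + m) choose m) + ((n - k + Suc m) choose (Suc m))"
        unfolding e1 binomial_Suc_Suc using e2 by simp
      then show "real ((Suc n - k + Suc m) choose (Suc m)) * f k
        = real ((n - k + Suc m) choose (Suc m)) * f k + real ((Suc n - k + m) choose m) * f k"
        by (simp add: algebra_simps)
    qed
    then show ?thesis by (simp add: sum.distrib)
  qed
  finally show ?thesis by (simp add: T_def)
qed

lemma T_sum: "T (Suc m) n f = (\<Sum>j=0..n. T m j f)"
proof (induction n)
  case 0 then show ?case by (simp add: T_0)
next
  case (Suc n) then show ?case by (simp add: T_Suc)
qed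

lemma T_zero: "T 0 n f = (\<Sum>k=0..n. f k)"
  by (simp add: T_def)

lemma cos_diff_cos: "cos (a - b::real) - cos (a + b) = 2 * sin a * sin b"
  by (simp add: cos_add cos_diff)
lemma sin_diff_sin: "sin (a + b::real) - sin (a - b) = 2 * cos a * sin b"
  by (simp add: sin_add sin_diff)

abbreviation fc :: "real \<Rightarrow> nat \<Rightarrow> real" where "fc x \<equiv> (\<lambda>k. cos ((real k + 1/2) * x))"
abbreviation fs :: "real \<Rightarrow> nat \<Rightarrow> real" where "fs x \<equiv> (\<lambda>k. sin ((real k + 1/2) * x))"

lemma L0c: "2 * sin (x/2) * T 0 n (fc x) = sin ((real n + 1) * x)"
proof (induction n)
  case 0 show ?case using sin_double[of "x/2"] by (simp add: T_zero)
next
  case (Suc n)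
  have e1: "(real n + 3/2) * x + x/2 = (real n + 2) * x" by (simp add: algebra_simps)
  have e2: "(real n + 3/2) * x - x/2 = (real n + 1) * x" by (simp add: algebra_simps)
  have id: "sin ((real n + 2) * x) - sin ((real n + 1) * x) = 2 * cos ((real n + 3/2) * x) * sin (x/2)"
    using sin_diff_sin[of "(real n + 3/2) * x" "x/2"] unfolding e1 e2 .
  have "T 0 (Suc n) (fc x) = T 0 n (fc x) + cos ((real n + 3/2) * x)"
    by (simp add: T_zero add.commute)
  then have "2 * sin (x/2) * T 0 (Suc n) (fc x) = sin ((real n + 1) * x) + 2 * sin (x/2) * cos ((real n + 3/2) * x)"
    using Suc.IH by (simp add: algebra_simps)
  also have "\<dots> = sin ((real n + 2) * x)" using id by (simp add: algebra_simps)
  finally show ?case by (simp add: add.commute)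
qed

lemma L0s: "2 * sin (x/2) * T 0 n (fs x) = 1 - cos ((real n + 1) * x)"
proof (induction n)
  case 0 show ?case using cos_double_sin[of "x/2"] by (simp add: T_zero power2_eq_square)
next
  case (Suc n)
  have e1: "(real n + 3/2) * x + x/2 = (real n + 2) * x" by (simp add: algebra_simps)
  have e2: "(real n + 3/2) * x - x/2 = (real n + 1) * x" by (simp add: algebra_simps)
  have id: "cos ((real n + 1) * x) - cos ((real n + 2) * x) = 2 * sin ((real n + 3/2) * x) * sin (x/2)"
    using cos_diff_cos[of "(real n + 3/2) * x" "x/2"] unfolding e1 e2 .
  have "T 0 (Suc n) (fs x) = T 0 n (fs x) + sin ((real n + 3/2) * x)"
    by (simp add: T_zero add.commute)
  then have "2 * sin (x/2) * T 0 (Suc n) (fs x) = 1 - cos ((real n + 1) * x) + 2 * sin (x/2) * sin ((real n + 3/2) * x)"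
    using Suc.IH by (simp add: algebra_simps)
  also have "\<dots> = 1 - cos ((real n + 2) * x)" using id by (simp add: algebra_simps)
  finally show ?case by (simp add: add.commute)
qed

lemma L1c: "4 * (sin (x/2))^2 * T 1 n (fc x) = cos (x/2) - cos ((real n + 3/2) * x)"
proof (induction n)
  case 0
  have e1: "x + x/2 = 3/2 * x" "x - x/2 = x/2" by (simp_all add: algebra_simps)
  have "cos (x/2) - cos (3/2 * x) = 2 * sin x * sin (x/2)"
    using cos_diff_cos[of x "x/2"] unfolding e1 .
  also have "\<dots> = 4 * (sin (x/2))^2 * cos (x/2)" using sin_double[of "x/2"]
    by (simp add: power2_eq_square)
  finally show ?case by (simp add: T_0)
next
  case (Suc n)
  have e1: "(real n + 2) * x + x/2 = (real n + 5/2) * x" by (simp add: algebra_simps)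
  have e2: "(real n + 2) * x - x/2 = (real n + 3/2) * x" by (simp add: algebra_simps)
  have id: "cos ((real n + 3/2) * x) - cos ((real n + 5/2) * x) = 2 * sin ((real n + 2) * x) * sin (x/2)"
    using cos_diff_cos[of "(real n + 2) * x" "x/2"] unfolding e1 e2 .
  have t: "T 1 (Suc n) (fc x) = T 1 n (fc x) + T 0 (Suc n) (fc x)"
    using T_Suc[of 0 n] by simp
  have h: "2 * sin (x/2) * T 0 (Suc n) (fc x) = sin ((real n + 2) * x)"
    using L0c[of x "Suc n"] by (simp add: add.commute add.left_commute)
  have "4 * (sin (x/2))^2 * T 1 (Suc n) (fc x) = 4 * (sin (x/2))^2 * T 1 n (fc x) + 2 * sin (x/2) * (2 * sin (x/2) * T 0 (Suc n) (fc x))"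
    unfolding t by (simp add: algebra_simps power2_eq_square)
  also have "\<dots> = cos (x/2) - cos ((real n + 3/2) * x) + 2 * sin (x/2) * sin ((real n + 2) * x)"
    by (simp only: Suc.IH h)
  also have "\<dots> = cos (x/2) - cos ((real n + 5/2) * x)" using id by (simp add: algebra_simps)
  finally show ?case by (simp add: algebra_simps)
qed

lemma L2c: "8 * (sin (x/2))^3 * T 2 n (fc x) = (real n + 2) * sin x - sin ((real n + 2) * x)"
proof (induction n)
  case 0
  have "2 * sin x - sin (2 * x) = 2 * sin x * (1 - cos x)" using sin_double[of x] by (simp add: algebra_simps)
  also have "\<dots> = 8 * (sin (x/2))^3 * cos (x/2)"
    using sin_double[of "x/2"] cos_double_sin[of "x/2"] by (simp add: power3_eq_cube power2_eq_square)
  finally show ?case by (simp add: T_0)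
next
  case (Suc n)
  have e1: "(real n + 5/2) * x + x/2 = (real n + 3) * x" by (simp add: algebra_simps)
  have e2: "(real n + 5/2) * x - x/2 = (real n + 2) * x" by (simp add: algebra_simps)
  have id: "sin ((real n + 3) * x) - sin ((real n + 2) * x) = 2 * cos ((real n + 5/2) * x) * sin (x/2)"
    using sin_diff_sin[of "(real n + 5/2) * x" "x/2"] unfolding e1 e2 .
  have t: "T 2 (Suc n) (fc x) = T 2 n (fc x) + T 1 (Suc n) (fc x)"
    using T_Suc[of 1 n] by (simp add: numeral_2_eq_2)
  have h: "4 * (sin (x/2))^2 * T 1 (Suc n) (fc x) = cos (x/2) - cos ((real n + 5/2) * x)"
    using L1c[of x "Suc n"] by (simp add: algebra_simps)
  have "8 * (sin (x/2))^3 * T 2 (Suc n) (fc x) = 8 * (sin (x/2))^3 * T 2 n (fc x) + 2 * sin (x/2) * (4 * (sin (x/2))^2 * T 1 (Suc n) (fc x))"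
    unfolding t by (simp add: algebra_simps power2_eq_square power3_eq_cube)
  also have "\<dots> = (real n + 2) * sin x - sin ((real n + 2) * x) + 2 * sin (x/2) * (cos (x/2) - cos ((real n + 5/2) * x))"
    by (simp only: Suc.IH h)
  also have "\<dots> = (real n + 3) * sin x - sin ((real n + 3) * x)"
    using id sin_double[of "x/2"] by (simp add: algebra_simps)
  finally show ?case by (simp add: algebra_simps)
qed

lemma sin_mult_le: assumes "sin x \<ge> 0" shows "\<bar>sin (real N * x)\<bar> \<le> real N * sin x"
proof (induction N)
  case 0 then show ?case by simp
next
  case (Suc N)
  have "\<bar>sin (real (Suc N) * x)\<bar> = \<bar>sin (real N * x) * cos x + cos (real N * x) * sin x\<bar>"
    by (simp add: distrib_right sin_add algebra_simps)
  also have "\<dots> \<le> \<bar>sin (real N * x)\<bar> * \<bar>cos x\<bar> + \<bar>cos (real N * x)\<bar> * sin x"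
    using assms by (metis abs_mult abs_of_nonneg abs_triangle_ineq)
  also have "\<dots> \<le> real N * sin x * 1 + 1 * sin x"
  proof (rule add_mono)
    show "\<bar>sin (real N * x)\<bar> * \<bar>cos x\<bar> \<le> real N * sin x * 1"
      by (rule mult_mono) (use Suc.IH assms in auto)
    show "\<bar>cos (real N * x)\<bar> * sin x \<le> 1 * sin x"
      by (rule mult_right_mono) (use assms in auto)
  qed
  finally show ?case by (simp add: algebra_simps)
qed

lemma sin_mult_lt: assumes "0 < x" "x < pi" "N \<ge> 2" shows "\<bar>sin (real N * x)\<bar> < real N * sin x"
proof -
  obtain M where N: "N = Suc M" and M: "M \<ge> 1" using assms(3) by (cases N) auto
  have sx: "sin x > 0" using assms sin_gt_zero by auto
  have c1: "\<bar>cos x\<bar> < 1"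
  proof -
    have "cos x = 1 - 2 * (sin (x/2))^2" using cos_double_sin[of "x/2"] by simp
    moreover have "sin (x/2) > 0" using assms by (intro sin_gt_zero) auto
    moreover have "cos x = 2 * (cos (x/2))^2 - 1" using cos_double_cos[of "x/2"] by simp
    moreover have "cos (x/2) > 0" using assms by (intro cos_gt_zero_pi) auto
    ultimately show ?thesis by (smt (verit) zero_less_power)
  qed
  have "\<bar>sin (real N * x)\<bar> = \<bar>sin (real M * x) * cos x + cos (real M * x) * sin x\<bar>"
    unfolding N by (simp add: distrib_right sin_add algebra_simps)
  also have "\<dots> \<le> \<bar>sin (real M * x)\<bar> * \<bar>cos x\<bar> + \<bar>cos (real M * x)\<bar> * sin x"
    using sx by (metis abs_mult abs_of_nonneg abs_triangle_ineq less_imp_le)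
  also have "\<dots> < real M * sin x * 1 + 1 * sin x"
  proof (rule add_less_le_mono)
    have "\<bar>sin (real M * x)\<bar> * \<bar>cos x\<bar> \<le> real M * sin x * \<bar>cos x\<bar>"
      by (rule mult_right_mono) (use sin_mult_le[of x M] sx in auto)
    also have "\<dots> < real M * sin x * 1"
      by (rule mult_strict_left_mono) (use c1 sx M in auto)
    finally show "\<bar>sin (real M * x)\<bar> * \<bar>cos x\<bar> < real M * sin x * 1" .
    show "\<bar>cos (real M * x)\<bar> * sin x \<le> 1 * sin x"
      by (rule mult_right_mono) (use sx in auto)
  qed
  finally show ?thesis unfolding N by (simp add: algebra_simps)
qed

lemma sc_facts: assumes "0 < x" "x < pi"
  shows "sin (x/2) > 0" "cos (x/2) > 0" "cos (x/2) < 1" "(sin (x/2))^2 + (cos (x/2))^2 = 1"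
proof -
  show s: "sin (x/2) > 0" using assms by (intro sin_gt_zero) auto
  show "cos (x/2) > 0" using assms by (intro cos_gt_zero_pi) auto
  show e: "(sin (x/2))^2 + (cos (x/2))^2 = 1" by simp
  show "cos (x/2) < 1"
  proof -
    have "(sin (x/2))^2 > 0" using s by simp
    then have "(cos (x/2))^2 < 1" using e by linarith
    then show ?thesis by (simp add: abs_square_less_1)
  qed
qed

lemma T_fs_nonneg: assumes "0 < x" "x < pi" shows "T m n (fs x) \<ge> 0"
proof (induction m arbitrary: n)
  case 0
  have "2 * sin (x/2) * T 0 n (fs x) \<ge> 0" unfolding L0s by simp
  then show ?case using sc_facts[OF assms] by (simp add: zero_le_mult_iff)
next
  case (Suc m) then show ?case by (simp add: T_sum sum_nonneg)
qed

lemma T_fs_pos: assumes "0 < x" "x < pi" shows "T (Suc m) n (fs x) > 0"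
proof -
  have "T (Suc m) n (fs x) = T m 0 (fs x) + (\<Sum>j=1..n. T m j (fs x))"
    unfolding T_sum by (simp add: sum.atLeast_Suc_atMost)
  moreover have "(\<Sum>j=1..n. T m j (fs x)) \<ge> 0" using T_fs_nonneg[OF assms] by (simp add: sum_nonneg)
  moreover have "T m 0 (fs x) > 0" using sc_facts[OF assms] by (simp add: T_0)
  ultimately show ?thesis by simp
qed

lemma T1_fc: assumes "0 < x" "x < pi" shows "T 1 n (fc x) > -1/4"
proof -
  note f = sc_facts[OF assms]
  have "4 * (sin (x/2))^2 * T 1 n (fc x) \<ge> cos (x/2) - 1" unfolding L1c by simp
  moreover have "cos (x/2) - 1 > -((sin (x/2))^2)"
  proof -
    have "cos (x/2) * (1 - cos (x/2)) > 0" using f by simp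
    moreover have "(sin (x/2))^2 = 1 - cos (x/2) * cos (x/2)" using f(4) by (simp add: power2_eq_square algebra_simps)
    ultimately show ?thesis by (simp add: algebra_simps)
  qed
  ultimately have "(sin (x/2))^2 * (4 * T 1 n (fc x) + 1) > 0" by (simp add: algebra_simps)
  then show ?thesis using f by (simp add: zero_less_mult_iff)
qed

lemma T2_fc: assumes "0 < x" "x < pi" shows "T 2 n (fc x) > 0"
proof -
  note f = sc_facts[OF assms]
  have "\<bar>sin (real (n+2) * x)\<bar> < real (n+2) * sin x" using sin_mult_lt[OF assms, of "n+2"] by simp
  then have "8 * (sin (x/2))^3 * T 2 n (fc x) > 0" unfolding L2c by (simp add: algebra_simps)
  then show ?thesis using f by (simp add: zero_less_mult_iff)
qed

lemma Tm_fc: assumes "0 < x" "x < pi" "m \<ge> 2" shows "T m n (fc x) > 0"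
  using assms(3)
proof (induction m arbitrary: n rule: dec_induct)
  case base then show ?case using T2_fc[OF assms(1,2)] by simp
next
  case (step m) then show ?case by (simp add: T_sum sum_pos)
qed

lemma T_one: "T m 1 f = real (Suc m) * f 0 + f 1"
  by (simp add: T_def)

lemma sharp_sin: assumes "\<epsilon> > 0" shows "\<exists>x. 0 < x \<and> x < pi \<and> T m 1 (fs x) < \<epsilon>"
proof -
  define x where "x = min 1 (\<epsilon> / (2 * (real m + 3)))"
  have x0: "x > 0" using assms by (simp add: x_def)
  have x1: "x \<le> 1" by (simp add: x_def)
  have xe: "x * (2 * (real m + 3)) \<le> \<epsilon>"
  proof -
    have "x \<le> \<epsilon> / (2 * (real m + 3))" by (simp add: x_def)
    then show ?thesis by (subst (asm) pos_le_divide_eq) auto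
  qed
  have "T m 1 (fs x) = real (Suc m) * sin (x/2) + sin (3/2 * x)" unfolding T_one by simp
  also have "\<dots> \<le> real (Suc m) * (x/2) + 3/2 * x"
    apply (intro add_mono mult_left_mono sin_x_le_x) using x0 by auto
  also have "\<dots> = (real m + 4) / 2 * x" by (simp add: algebra_simps)
  also have "\<dots> < 2 * (real m + 3) * x" using x0 by (intro mult_strict_right_mono) auto
  also have "\<dots> \<le> \<epsilon>" using xe by (simp add: algebra_simps)
  finally show ?thesis using x0 x1 pi_ge_two by (intro exI[of _ x]) auto
qed

lemma sharp_cos2: assumes "\<epsilon> > 0" shows "\<exists>x. 0 < x \<and> x < pi \<and> T m 1 (fc x) < \<epsilon>"
proof -
  define d where "d = min (1/2) (\<epsilon> / (2 * (real m + 1)))"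
  have d0: "d > 0" using assms by (simp add: d_def)
  have d1: "d \<le> 1/2" unfolding d_def by linarith
  have de: "d * (2 * (real m + 1)) \<le> \<epsilon>"
  proof -
    have "d \<le> \<epsilon> / (2 * (real m + 1))" by (simp add: d_def)
    then show ?thesis by (subst (asm) pos_le_divide_eq) auto
  qed
  define x where "x = pi - 2 * d"
  have c1: "cos (x/2) = sin d"
  proof -
    have h: "x/2 = pi/2 - d" by (simp add: x_def field_simps)
    show ?thesis unfolding h by (simp add: cos_diff)
  qed
  have c2: "cos ((1 + 1/2) * x) = - sin (3 * d)"
  proof -
    have h: "(1 + 1/2) * x = pi + (pi/2 - 3 * d)" by (simp add: x_def field_simps)
    show ?thesis unfolding h by (simp only: cos_periodic_pi2) (simp add: cos_diff)
  qed
  have s3: "sin (3 * d) \<ge> 0" using d0 d1 pi_ge_two by (intro sin_ge_zero) auto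
  have "T m 1 (fc x) = real (Suc m) * cos (x/2) + cos ((1 + 1/2) * x)" unfolding T_one by simp
  also have "\<dots> \<le> real (Suc m) * d" unfolding c1 c2
  proof -
    have "real (Suc m) * sin d \<le> real (Suc m) * d"
      by (rule mult_left_mono[OF sin_x_le_x]) (use d0 in auto)
    then show "real (Suc m) * sin d + - sin (3 * d) \<le> real (Suc m) * d" using s3 by linarith
  qed
  also have "\<dots> < \<epsilon>"
  proof -
    have "2 * (real (Suc m) * d) \<le> \<epsilon>" using de by (simp add: algebra_simps)
    moreover have "real (Suc m) * d > 0" using d0 by simp
    ultimately show ?thesis by linarith
  qed
  finally have "T m 1 (fc x) < \<epsilon>" .
  moreover have "0 < x" "x < pi" using d0 d1 pi_ge_two by (auto simp: x_def)
  ultimately show ?thesis by blast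
qed

lemma sharp_cos1: assumes "\<epsilon> > 0"
  shows "\<exists>n x. n \<ge> 1 \<and> 0 < x \<and> x < pi \<and> T 1 n (fc x) < -1/4 + \<epsilon>"
proof -
  obtain j0 :: nat where j0: "1/\<epsilon> < real j0" using reals_Archimedean2 by blast
  define j where "j = Suc j0"
  define n where "n = 2 * j0 + 1"
  define x where "x = 4 * pi * real j / (4 * real j + 1)"
  have jpos: "real j \<ge> 1" by (simp add: j_def)
  have den: "4 * real j + 1 > 0" using jpos by simp
  have jeps: "1 / real j < \<epsilon>"
  proof -
    have "1/\<epsilon> < real j" using j0 by (simp add: j_def)
    then have "1 < \<epsilon> * real j" using assms by (simp add: divide_less_eq mult.commute)
    then show ?thesis using jpos by (simp add: divide_less_eq mult.commute)
  qed
  have x0: "0 < x" using jpos den by (simp add: x_def)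
  have xpi: "x < pi" unfolding x_def using den by (simp add: divide_less_eq)
  note f = sc_facts[OF x0 xpi]
  have arg: "(real n + 3/2) * x = 2 * real j * pi"
    using den unfolding x_def n_def j_def by (simp add: field_simps)
  define t where "t = pi / (2 * (4 * real j + 1))"
  have t0: "t \<ge> 0" using den by (simp add: t_def)
  have hx: "x/2 = pi/2 - t" using den unfolding x_def t_def by (simp add: field_simps)
  have cdef: "cos (x/2) = sin t" unfolding hx by (simp add: cos_diff)
  have ct: "cos (x/2) \<le> t" unfolding cdef using t0 by (rule sin_x_le_x)
  have tj: "t < 1 / real j"
  proof -
    have "t \<le> 4 / (2 * (4 * real j + 1))" unfolding t_def using den pi_less_4
      by (intro divide_right_mono) auto
    also have "\<dots> < 1 / real j" using jpos den by (simp add: field_simps)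
    finally show ?thesis .
  qed
  define c where "c = cos (x/2)"
  define y where "y = 4 * T 1 n (fc x) + 1"
  have "4 * (sin (x/2))^2 * T 1 n (fc x) = c - 1" unfolding L1c arg c_def by simp
  moreover have "(sin (x/2))^2 = (1 - c) * (1 + c)" using f(4) unfolding c_def by (simp add: algebra_simps power2_eq_square)
  ultimately have "(1 - c) * ((1 + c) * (4 * T 1 n (fc x)) + 1) = 0" by (simp add: algebra_simps)
  moreover have "1 - c \<noteq> 0" using f(3) unfolding c_def by simp
  ultimately have eq: "(1 + c) * (4 * T 1 n (fc x)) + 1 = 0" by simp
  then have yeq: "y * (1 + c) = c" unfolding y_def by (simp add: algebra_simps)
  have cpos: "c > 0" using f(2) by (simp add: c_def)
  have "0 < y * (1 + c)" using yeq cpos by simp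
  then have ypos: "y > 0" using cpos by (simp add: zero_less_mult_iff)
  have "y + y * c = c" using yeq by (simp add: algebra_simps)
  moreover have "y * c > 0" using ypos cpos by simp
  ultimately have "y < c" by linarith
  then have "y < \<epsilon>" using ct tj jeps c_def by linarith
  then have "T 1 n (fc x) < -1/4 + \<epsilon>" unfolding y_def using assms by linarith
  moreover have "n \<ge> 1" by (simp add: n_def)
  ultimately show ?thesis using x0 xpi by blast
qed

theorem theorem2:
  fixes m :: nat
  assumes "m \<ge> 1"
  shows "(\<forall>n::nat. \<forall>x::real. n \<ge> 1 \<and> 0 < x \<and> x < pi \<longrightarrow>
            (\<Sum>k=0..n. real ((n - k + m) choose m) * cos ((real k + 1/2) * x))
              > (if m = 1 then -1/4 else 0))
       \<and> (\<forall>n::nat. \<forall>x::real. n \<ge> 1 \<and> 0 < x \<and> x < pi \<longrightarrow>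
            (\<Sum>k=0..n. real ((n - k + m) choose m) * sin ((real k + 1/2) * x)) > 0)
       \<and> (\<forall>\<epsilon>::real. \<epsilon> > 0 \<longrightarrow> (\<exists>n::nat. \<exists>x::real. n \<ge> 1 \<and> 0 < x \<and> x < pi \<and>
            (\<Sum>k=0..n. real ((n - k + m) choose m) * cos ((real k + 1/2) * x))
              < (if m = 1 then -1/4 else 0) + \<epsilon>))
       \<and> (\<forall>\<epsilon>::real. \<epsilon> > 0 \<longrightarrow> (\<exists>n::nat. \<exists>x::real. n \<ge> 1 \<and> 0 < x \<and> x < pi \<and>
            (\<Sum>k=0..n. real ((n - k + m) choose m) * sin ((real k + 1/2) * x)) < \<epsilon>))"
proof -
  have TC: "\<And>n x. (\<Sum>k=0..n. real ((n - k + m) choose m) * cos ((real k + 1/2) * x)) = T m n (fc x)"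
    by (simp add: T_def)
  have TS: "\<And>n x. (\<Sum>k=0..n. real ((n - k + m) choose m) * sin ((real k + 1/2) * x)) = T m n (fs x)"
    by (simp add: T_def)
  obtain m0 where m0: "m = Suc m0" using assms by (cases m) auto
  have P1: "\<forall>n x. n \<ge> 1 \<and> 0 < x \<and> x < pi \<longrightarrow> T m n (fc x) > (if m = 1 then -1/4 else 0)"
  proof (intro allI impI)
    fix n :: nat and x :: real assume h: "n \<ge> 1 \<and> 0 < x \<and> x < pi"
    show "T m n (fc x) > (if m = 1 then -1/4 else 0)"
    proof (cases "m = 1")
      case True then show ?thesis using T1_fc[of x n] h by simp
    next
      case False then have "m \<ge> 2" using assms by simp
      then show ?thesis using Tm_fc[of x m n] h False by simp
    qed
  qed
  have P2: "\<forall>n x. n \<ge> 1 \<and> 0 < x \<and> x < pi \<longrightarrow> T m n (fs x) > 0"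
    using T_fs_pos[of _ m0] m0 by auto
  have P3: "\<forall>\<epsilon>::real. \<epsilon> > 0 \<longrightarrow> (\<exists>n x. n \<ge> 1 \<and> 0 < x \<and> x < pi \<and> T m n (fc x) < (if m = 1 then -1/4 else 0) + \<epsilon>)"
  proof (intro allI impI)
    fix \<epsilon> :: real assume e: "\<epsilon> > 0"
    show "\<exists>n x. n \<ge> 1 \<and> 0 < x \<and> x < pi \<and> T m n (fc x) < (if m = 1 then -1/4 else 0) + \<epsilon>"
    proof (cases "m = 1")
      case True then show ?thesis using sharp_cos1[OF e] by simp
    next
      case False
      obtain x where hx: "0 < x \<and> x < pi \<and> T m 1 (fc x) < \<epsilon>" using sharp_cos2[OF e] by blast
      show ?thesis using False hx by (intro exI[of _ "1::nat"] exI[of _ x]) simp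
    qed
  qed
  have P4: "\<forall>\<epsilon>::real. \<epsilon> > 0 \<longrightarrow> (\<exists>n x. n \<ge> 1 \<and> 0 < x \<and> x < pi \<and> T m n (fs x) < \<epsilon>)"
  proof (intro allI impI)
    fix \<epsilon> :: real assume e: "\<epsilon> > 0"
    obtain x where hx: "0 < x \<and> x < pi \<and> T m 1 (fs x) < \<epsilon>" using sharp_sin[OF e] by blast
    show "\<exists>n x. n \<ge> 1 \<and> 0 < x \<and> x < pi \<and> T m n (fs x) < \<epsilon>" using hx by (intro exI[of _ "1::nat"] exI[of _ x]) simp
  qed
  show ?thesis unfolding TC TS using P1 P2 P3 P4 by blast
qed

end
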